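(* Suppose $0\le\alpha_3\le\alpha_2\le\alpha_1\le\pi/4$, and define $\zeta_0=\cos\alpha_1\cos\alpha_2\cos\alpha_3-\mathrm{i}\sin\alpha_1\sin\alpha_2\sin\alpha_3$, $\zeta_1=\cos\alpha_1\sin\alpha_2\sin\alpha_3-\mathrm{i}\sin\alpha_1\cos\alpha_2\cos\alpha_3$, $\zeta_2=\sin\alpha_1\cos\alpha_2\sin\alpha_3-\mathrm{i}\cos\alpha_1\sin\alpha_2\cos\alpha_3$, $\zeta_3=\sin\alpha_1\sin\alpha_2\cos\alpha_3-\mathrm{i}\cos\alpha_1\cos\alpha_2\sin\alpha_3$. Then $|\zeta_0|>|\zeta_1|=|\zeta_2|=|\zeta_3|>0$ if and only if $0<\alpha_3=\alpha_2=\alpha_1<\pi/4$.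
   Context: The numbers $|\zeta_k|$ are the four Schmidt coefficients of the two-qubit unitary $U(\alpha_1,\alpha_2,\alpha_3)=\exp[-\mathrm{i}\sum_{k=1}^3\alpha_k\sigma_k\otimes\sigma_k]=\sum_{k=0}^3\zeta_k\sigma_k\otimes\sigma_k$ ($\sigma_0=I$, $\sigma_k$ Pauli matrices). *)

theory Defs
  imports Complex_Main
begin

text \<open>The coefficients zeta_k (k = 0..3) of the two-qubit unitary
  U(a1,a2,a3) in the Pauli product basis.\<close>
definition zeta :: "nat \<Rightarrow> real \<Rightarrow> real \<Rightarrow> real \<Rightarrow> complex" where
  "zeta k a1 a2 a3 =
     (if k = 0 then Complex (cos a1 * cos a2 * cos a3) (- (sin a1 * sin a2 * sin a3))
      else if k = 1 then Complex (cos a1 * sin a2 * sin a3) (- (sin a1 * cos a2 * cos a3))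
      else if k = 2 then Complex (sin a1 * cos a2 * sin a3) (- (cos a1 * sin a2 * cos a3))
      else Complex (sin a1 * sin a2 * cos a3) (- (cos a1 * cos a2 * sin a3)))"

end

theory Submission
  imports Defs
begin

lemma n0: "(cmod (zeta 0 a1 a2 a3))^2 = (cos a1 * cos a2 * cos a3)^2 + (sin a1 * sin a2 * sin a3)^2"
  by (simp add: zeta_def cmod_def)
lemma n1: "(cmod (zeta 1 a1 a2 a3))^2 = (cos a1 * sin a2 * sin a3)^2 + (sin a1 * cos a2 * cos a3)^2"
  by (simp add: zeta_def cmod_def)
lemma n2: "(cmod (zeta 2 a1 a2 a3))^2 = (sin a1 * cos a2 * sin a3)^2 + (cos a1 * sin a2 * cos a3)^2"
  by (simp add: zeta_def cmod_def)
lemma n3: "(cmod (zeta 3 a1 a2 a3))^2 = (sin a1 * sin a2 * cos a3)^2 + (cos a1 * cos a2 * sin a3)^2"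
  by (simp add: zeta_def cmod_def)

lemma d01: "(cmod (zeta 0 a1 a2 a3))^2 - (cmod (zeta 1 a1 a2 a3))^2
   = cos (2*a1) * cos (a2+a3) * cos (a2-a3)"
  unfolding n0 n1 cos_double cos_add cos_diff by (simp add: algebra_simps power2_eq_square)

lemma d12: "(cmod (zeta 1 a1 a2 a3))^2 - (cmod (zeta 2 a1 a2 a3))^2
   = cos (2*a3) * sin (a1-a2) * sin (a1+a2)"
  unfolding n1 n2 cos_double sin_add sin_diff
  by (simp add: algebra_simps power2_eq_square sin_squared_eq)

lemma d23: "(cmod (zeta 2 a1 a2 a3))^2 - (cmod (zeta 3 a1 a2 a3))^2
   = cos (2*a1) * sin (a2-a3) * sin (a2+a3)"
  unfolding n2 n3 cos_double sin_add sin_diff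
  by (simp add: algebra_simps power2_eq_square sin_squared_eq)

lemma sin_zero_small: assumes "0 \<le> x" "x < pi" "sin x = 0" shows "x = 0"
  using sin_gt_zero[of x] assms by fastforce

lemma cmod_eq_sq: "(cmod a = cmod b) \<longleftrightarrow> (cmod a)^2 - (cmod b)^2 = 0"
proof -
  have "(cmod a = cmod b) \<longleftrightarrow> (cmod a)^2 = (cmod b)^2"
    using power2_eq_iff_nonneg[of "cmod a" "cmod b"] by simp
  then show ?thesis by simp
qed
lemma cmod_lt_sq: "(cmod a > cmod b) \<longleftrightarrow> (cmod a)^2 - (cmod b)^2 > 0"
  using power_less_imp_less_base[of "cmod b" 2 "cmod a"] power_strict_mono[of "cmod b" "cmod a" 2]
  by auto

theorem lemma9:
  fixes a1 a2 a3 :: real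
  assumes "0 \<le> a3" and "a3 \<le> a2" and "a2 \<le> a1" and "a1 \<le> pi / 4"
  shows "(cmod (zeta 0 a1 a2 a3) > cmod (zeta 1 a1 a2 a3) \<and>
          cmod (zeta 1 a1 a2 a3) = cmod (zeta 2 a1 a2 a3) \<and>
          cmod (zeta 2 a1 a2 a3) = cmod (zeta 3 a1 a2 a3) \<and>
          cmod (zeta 3 a1 a2 a3) > 0)
     \<longleftrightarrow> (0 < a3 \<and> a3 = a2 \<and> a2 = a1 \<and> a1 < pi / 4)"
proof
  assume H: "cmod (zeta 0 a1 a2 a3) > cmod (zeta 1 a1 a2 a3) \<and>
          cmod (zeta 1 a1 a2 a3) = cmod (zeta 2 a1 a2 a3) \<and>
          cmod (zeta 2 a1 a2 a3) = cmod (zeta 3 a1 a2 a3) \<and>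
          cmod (zeta 3 a1 a2 a3) > 0"
  have "(cmod (zeta 0 a1 a2 a3))^2 - (cmod (zeta 1 a1 a2 a3))^2 > 0"
    using H cmod_lt_sq[where a="zeta 0 a1 a2 a3" and b="zeta 1 a1 a2 a3"] by blast
  then have c1: "cos (2*a1) \<noteq> 0" unfolding d01 by auto
  have a1lt: "a1 < pi/4"
  proof (rule ccontr)
    assume "\<not> a1 < pi/4" then have "2*a1 = pi/2" using assms by linarith
    then show False using c1 by (metis cos_pi_half)
  qed
  have "- (pi/2) < 2*a3" "2*a3 < pi/2" using assms a1lt by linarith+
  then have c3: "cos (2*a3) \<noteq> 0" using cos_gt_zero_pi[of "2*a3"] by linarith
  have "(cmod (zeta 2 a1 a2 a3))^2 - (cmod (zeta 3 a1 a2 a3))^2 = 0"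
    using H by simp
  then have "sin (a2-a3) * sin (a2+a3) = 0" unfolding d23 using c1 by simp
  moreover have "a2 - a3 < pi" "a2 + a3 < pi" using assms a1lt pi_gt_zero by linarith+
  ultimately have e23: "a2 = a3" using sin_zero_small[of "a2-a3"] sin_zero_small[of "a2+a3"] assms
    by (smt (verit) mult_eq_0_iff)
  have "(cmod (zeta 1 a1 a2 a3))^2 - (cmod (zeta 2 a1 a2 a3))^2 = 0"
    using H by simp
  then have "sin (a1-a2) * sin (a1+a2) = 0" unfolding d12 using c3 by simp
  moreover have "a1 - a2 < pi" "a1 + a2 < pi" using assms a1lt pi_gt_zero by linarith+
  ultimately have e12: "a1 = a2" using sin_zero_small[of "a1-a2"] sin_zero_small[of "a1+a2"] assms
    by (smt (verit) mult_eq_0_iff)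
  have "a3 \<noteq> 0"
  proof
    assume "a3 = 0" then have "zeta 3 a1 a2 a3 = 0" using e12 e23 by (simp add: zeta_def complex_eq_iff)
    then show False using H by simp
  qed
  then show "0 < a3 \<and> a3 = a2 \<and> a2 = a1 \<and> a1 < pi / 4" using assms e12 e23 a1lt by auto
next
  assume H: "0 < a3 \<and> a3 = a2 \<and> a2 = a1 \<and> a1 < pi / 4"
  have "- (pi/2) < 2*a1" "2*a1 < pi/2" using H by linarith+
  then have cpos: "cos (2*a1) > 0" using cos_gt_zero_pi[of "2*a1"] by linarith
  have "- (pi/2) < a2+a3" "a2+a3 < pi/2" using H by linarith+
  then have cp2: "cos (a2+a3) > 0" using cos_gt_zero_pi[of "a2+a3"] by linarith
  have "a1 < pi" "- (pi/2) < a1" "a1 < pi/2" using H pi_gt_zero by linarith+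
  then have s: "sin a1 > 0" "cos a1 > 0" using H sin_gt_zero[of a1] cos_gt_zero_pi[of a1] by auto
  have "(cmod (zeta 3 a1 a2 a3))^2 > 0" unfolding n3 using H s by (simp add: add_pos_pos)
  then have p3: "cmod (zeta 3 a1 a2 a3) > 0" using norm_ge_zero[of "zeta 3 a1 a2 a3"] by (cases "cmod (zeta 3 a1 a2 a3) = 0") auto
  have "(cmod (zeta 0 a1 a2 a3))^2 - (cmod (zeta 1 a1 a2 a3))^2 > 0"
    unfolding d01 using H cpos cp2 by (simp add: mult_pos_pos)
  then have A: "cmod (zeta 0 a1 a2 a3) > cmod (zeta 1 a1 a2 a3)" using cmod_lt_sq[where a="zeta 0 a1 a2 a3" and b="zeta 1 a1 a2 a3"] by blast
  have "(cmod (zeta 1 a1 a2 a3))^2 - (cmod (zeta 2 a1 a2 a3))^2 = 0"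
    unfolding d12 using H by simp
  then have B: "cmod (zeta 1 a1 a2 a3) = cmod (zeta 2 a1 a2 a3)" using cmod_eq_sq[of "zeta 1 a1 a2 a3" "zeta 2 a1 a2 a3"] by blast
  have "(cmod (zeta 2 a1 a2 a3))^2 - (cmod (zeta 3 a1 a2 a3))^2 = 0"
    unfolding d23 using H by simp
  then have C: "cmod (zeta 2 a1 a2 a3) = cmod (zeta 3 a1 a2 a3)" using cmod_eq_sq[of "zeta 2 a1 a2 a3" "zeta 3 a1 a2 a3"] by blast
  show "cmod (zeta 0 a1 a2 a3) > cmod (zeta 1 a1 a2 a3) \<and>
          cmod (zeta 1 a1 a2 a3) = cmod (zeta 2 a1 a2 a3) \<and>
          cmod (zeta 2 a1 a2 a3) = cmod (zeta 3 a1 a2 a3) \<and>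
          cmod (zeta 3 a1 a2 a3) > 0"
    using A B C p3 by blast
qed

end
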